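(* Let $(l,k,b)$ be a suspension triplet for $(X_A,\sigma_A)$ and $c=l-k$. Then there is a bijective correspondence $\tau\mapsto\gamma_\tau$ between the primitive periodic orbits $\tau\in P_{orb}(S^{l,k}_{A,b},\phi_A)$ of the one-sided suspension and the periodic orbits $\gamma_\tau\in P_{orb}(X_A)$ of $(X_A,\sigma_A)$ such that $\ell(\tau)=\beta_{\gamma_\tau}(c)$, where for $\gamma=\{x,\sigma_A(x),\dots,\sigma_A^{p-1}(x)\}$ with $p$ the least period of $x$, $\beta_\gamma(c)=\sum_{i=0}^{p-1}c(\sigma_A^i(x))$.
   Context: Let $N>1$ and $A$ an irreducible $N\times N$ $\{0,1\}$-matrix which is not a permutation matrix. $X_A$ is the compact space of sequences $(x_n)_{n\in\mathbb N}$, $x_n\in\{1,\dots,N\}$, $A(x_n,x_{n+1})=1$, with $\sigma_A((x_n)_n)=(x_{n+1})_n$. $\mathbb Z_+$, $\mathbb R_+$ are nonnegative integers/reals. A periodic orbit of $(X_A,\sigma_A)$ is a set $\{x,\sigma_A(x),\dots,\sigma_A^{p-1}(x)\}$ where $\sigma_A^p(x)=x$ and $p\ge1$ is minimal; $P_{orb}(X_A)$ is the set of these. $H^A$ is the quotient of $C(X_A,\mathbb Z)$ by $\{u-u\circ\sigma_A\}$, $H^A_+$ the classes of $\mathbb Z_+$-valued continuous functions; $[f]\in H^A_+$ is an order unit if for every $[u]\in H^A$ some $n\in\mathbb N$ has $n[f]-[u]\in H^A_+$. A suspension triplet is $(l,k,b)$ with $l,k\in C(X_A,\mathbb R_+)$,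 $b\in C(X_A,\mathbb R)$ such that $c=l-k$ is integer-valued with $[c]$ an order unit, and $l-b$, $k-b\circ\sigma_A$ take values in $\mathbb Z_+$. $S^{l,k}_{A,b}$ is the quotient of $\{(x,r)\in X_A\times\mathbb R: r\ge b(x)\}$ by the equivalence relation generated by $(x,r)\sim(\sigma_A(x),r-c(x))$ whenever $r\ge l(x)$, with classes $[x,r]$ and flow $\phi_{A,t}([x,r])=[x,r+t]$, $t\in\mathbb R_+$. A (primitive) periodic orbit of this flow is a set $\tau=\{\phi_{A,t}(u):t\in\mathbb R_+\}$ for a point $u$ with $\phi_{A,T}(u)=u$ for some $T>0$; $P_{orb}(S^{l,k}_{A,b},\phi_A)$ is the set of these, and $\ell(\tau)=\min\{t>0:\phi_{A,t}(u)=u\}$ for any $u\in\tau$. *)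

theory Defs
  imports "HOL-Analysis.Analysis"
begin

text \<open>Alphabet {1..N}; the matrix A is a function nat => nat => nat, only entries
 with indices in {1..N} matter. Sequences x :: nat => nat carry the product topology
 (instance from Function_Topology, nat discrete).\<close>

definition zero_one_matrix :: "nat \<Rightarrow> (nat \<Rightarrow> nat \<Rightarrow> nat) \<Rightarrow> bool" where
  "zero_one_matrix N A \<longleftrightarrow> (\<forall>i\<in>{1..N}. \<forall>j\<in>{1..N}. A i j \<in> {0,1})"

text \<open>Irreducible: for all i j some power A^n, n \<ge> 1, has positive (i,j)-entry,
 i.e. there is an admissible path of length n from i to j.\<close>
definition irreducible_matrix :: "nat \<Rightarrow> (nat \<Rightarrow> nat \<Rightarrow> nat) \<Rightarrow> bool" where
  "irreducible_matrix N A \<longleftrightarrow>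
     (\<forall>i\<in>{1..N}. \<forall>j\<in>{1..N}. \<exists>n>0. \<exists>w::nat\<Rightarrow>nat.
        w 0 = i \<and> w n = j \<and> (\<forall>m\<le>n. w m \<in> {1..N}) \<and> (\<forall>m<n. A (w m) (w (Suc m)) = 1))"

definition permutation_matrix :: "nat \<Rightarrow> (nat \<Rightarrow> nat \<Rightarrow> nat) \<Rightarrow> bool" where
  "permutation_matrix N A \<longleftrightarrow>
     (\<forall>i\<in>{1..N}. \<forall>j\<in>{1..N}. A i j \<in> {0,1}) \<and>
     (\<forall>i\<in>{1..N}. \<exists>!j. j \<in> {1..N} \<and> A i j = 1) \<and>
     (\<forall>j\<in>{1..N}. \<exists>!i. i \<in> {1..N} \<and> A i j = 1)"

definition XA :: "nat \<Rightarrow> (nat \<Rightarrow> nat \<Rightarrow> nat) \<Rightarrow> (nat \<Rightarrow> nat) set" where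
  "XA N A = {x. (\<forall>n. x n \<in> {1..N}) \<and> (\<forall>n. A (x n) (x (Suc n)) = 1)}"

definition shift :: "(nat \<Rightarrow> nat) \<Rightarrow> (nat \<Rightarrow> nat)" where
  "shift x = (\<lambda>n. x (Suc n))"

text \<open>Elements of C(X_A,Z) are represented as real-valued functions, continuous on X_A,
 with integer values on X_A.\<close>
definition CZ :: "nat \<Rightarrow> (nat \<Rightarrow> nat \<Rightarrow> nat) \<Rightarrow> ((nat \<Rightarrow> nat) \<Rightarrow> real) set" where
  "CZ N A = {f. continuous_on (XA N A) f \<and> (\<forall>x\<in>XA N A. f x \<in> \<int>)}"

definition coboundary :: "nat \<Rightarrow> (nat \<Rightarrow> nat \<Rightarrow> nat) \<Rightarrow> ((nat \<Rightarrow> nat) \<Rightarrow> real) \<Rightarrow> bool" where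
  "coboundary N A g \<longleftrightarrow> (\<exists>h\<in>CZ N A. \<forall>x\<in>XA N A. g x = h x - h (shift x))"

definition in_Hplus :: "nat \<Rightarrow> (nat \<Rightarrow> nat \<Rightarrow> nat) \<Rightarrow> ((nat \<Rightarrow> nat) \<Rightarrow> real) \<Rightarrow> bool" where
  "in_Hplus N A g \<longleftrightarrow>
     (\<exists>f\<in>CZ N A. (\<forall>x\<in>XA N A. f x \<ge> 0) \<and> coboundary N A (\<lambda>x. g x - f x))"

definition order_unit :: "nat \<Rightarrow> (nat \<Rightarrow> nat \<Rightarrow> nat) \<Rightarrow> ((nat \<Rightarrow> nat) \<Rightarrow> real) \<Rightarrow> bool" where
  "order_unit N A f \<longleftrightarrow> in_Hplus N A f \<and>
     (\<forall>u\<in>CZ N A. \<exists>n::nat. in_Hplus N A (\<lambda>x. real n * f x - u x))"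

definition suspension_triplet ::
  "nat \<Rightarrow> (nat \<Rightarrow> nat \<Rightarrow> nat) \<Rightarrow> ((nat \<Rightarrow> nat) \<Rightarrow> real) \<Rightarrow> ((nat \<Rightarrow> nat) \<Rightarrow> real)
     \<Rightarrow> ((nat \<Rightarrow> nat) \<Rightarrow> real) \<Rightarrow> bool" where
  "suspension_triplet N A l k b \<longleftrightarrow>
     continuous_on (XA N A) l \<and> continuous_on (XA N A) k \<and> continuous_on (XA N A) b \<and>
     (\<forall>x\<in>XA N A. l x \<ge> 0 \<and> k x \<ge> 0) \<and>
     (\<forall>x\<in>XA N A. l x - k x \<in> \<int>) \<and>
     order_unit N A (\<lambda>x. l x - k x) \<and>
     (\<forall>x\<in>XA N A. l x - b x \<in> \<int> \<and> l x - b x \<ge> 0) \<and>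
     (\<forall>x\<in>XA N A. k x - b (shift x) \<in> \<int> \<and> k x - b (shift x) \<ge> 0)"

definition susp_dom :: "nat \<Rightarrow> (nat \<Rightarrow> nat \<Rightarrow> nat) \<Rightarrow> ((nat \<Rightarrow> nat) \<Rightarrow> real)
     \<Rightarrow> ((nat \<Rightarrow> nat) \<times> real) set" where
  "susp_dom N A b = {(x, r). x \<in> XA N A \<and> r \<ge> b x}"

definition susp_step :: "nat \<Rightarrow> (nat \<Rightarrow> nat \<Rightarrow> nat) \<Rightarrow> ((nat \<Rightarrow> nat) \<Rightarrow> real)
     \<Rightarrow> ((nat \<Rightarrow> nat) \<Rightarrow> real) \<Rightarrow> ((nat \<Rightarrow> nat) \<Rightarrow> real)
     \<Rightarrow> (((nat \<Rightarrow> nat) \<times> real) \<times> ((nat \<Rightarrow> nat) \<times> real)) set" where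
  "susp_step N A l k b = {((x, r), (shift x, r - (l x - k x))) | x r.
      (x, r) \<in> susp_dom N A b \<and> r \<ge> l x}"

definition susp_eq :: "nat \<Rightarrow> (nat \<Rightarrow> nat \<Rightarrow> nat) \<Rightarrow> ((nat \<Rightarrow> nat) \<Rightarrow> real)
     \<Rightarrow> ((nat \<Rightarrow> nat) \<Rightarrow> real) \<Rightarrow> ((nat \<Rightarrow> nat) \<Rightarrow> real)
     \<Rightarrow> (((nat \<Rightarrow> nat) \<times> real) \<times> ((nat \<Rightarrow> nat) \<times> real)) set" where
  "susp_eq N A l k b = Id_on (susp_dom N A b) \<union> (susp_step N A l k b \<union> (susp_step N A l k b)\<inverse>)\<^sup>+"

definition susp_space :: "nat \<Rightarrow> (nat \<Rightarrow> nat \<Rightarrow> nat) \<Rightarrow> ((nat \<Rightarrow> nat) \<Rightarrow> real)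
     \<Rightarrow> ((nat \<Rightarrow> nat) \<Rightarrow> real) \<Rightarrow> ((nat \<Rightarrow> nat) \<Rightarrow> real)
     \<Rightarrow> ((nat \<Rightarrow> nat) \<times> real) set set" where
  "susp_space N A l k b = susp_dom N A b // susp_eq N A l k b"

text \<open>Flow: phi_t [x,r] = [x, r+t] (the union of the classes of the shifted representatives,
 which is the class [x,r+t] by well-definedness).\<close>
definition susp_flow :: "nat \<Rightarrow> (nat \<Rightarrow> nat \<Rightarrow> nat) \<Rightarrow> ((nat \<Rightarrow> nat) \<Rightarrow> real)
     \<Rightarrow> ((nat \<Rightarrow> nat) \<Rightarrow> real) \<Rightarrow> ((nat \<Rightarrow> nat) \<Rightarrow> real)
     \<Rightarrow> real \<Rightarrow> ((nat \<Rightarrow> nat) \<times> real) set \<Rightarrow> ((nat \<Rightarrow> nat) \<times> real) set" where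
  "susp_flow N A l k b t C = susp_eq N A l k b `` {(x, r + t) | x r. (x, r) \<in> C}"

definition flow_Porb :: "nat \<Rightarrow> (nat \<Rightarrow> nat \<Rightarrow> nat) \<Rightarrow> ((nat \<Rightarrow> nat) \<Rightarrow> real)
     \<Rightarrow> ((nat \<Rightarrow> nat) \<Rightarrow> real) \<Rightarrow> ((nat \<Rightarrow> nat) \<Rightarrow> real)
     \<Rightarrow> ((nat \<Rightarrow> nat) \<times> real) set set set" where
  "flow_Porb N A l k b = {\<tau>. \<exists>u\<in>susp_space N A l k b.
      (\<exists>T>0. susp_flow N A l k b T u = u) \<and> \<tau> = {susp_flow N A l k b t u | t. t \<ge> 0}}"

definition orbit_length :: "nat \<Rightarrow> (nat \<Rightarrow> nat \<Rightarrow> nat) \<Rightarrow> ((nat \<Rightarrow> nat) \<Rightarrow> real)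
     \<Rightarrow> ((nat \<Rightarrow> nat) \<Rightarrow> real) \<Rightarrow> ((nat \<Rightarrow> nat) \<Rightarrow> real)
     \<Rightarrow> ((nat \<Rightarrow> nat) \<times> real) set set \<Rightarrow> real" where
  "orbit_length N A l k b \<tau> =
     (let u = (SOME u. u \<in> \<tau>) in LEAST t. t > 0 \<and> susp_flow N A l k b t u = u)"

definition least_period :: "(nat \<Rightarrow> nat) \<Rightarrow> nat" where
  "least_period x = (LEAST p. p \<ge> 1 \<and> (shift ^^ p) x = x)"

definition XA_Porb :: "nat \<Rightarrow> (nat \<Rightarrow> nat \<Rightarrow> nat) \<Rightarrow> (nat \<Rightarrow> nat) set set" where
  "XA_Porb N A = {\<gamma>. \<exists>x\<in>XA N A. (\<exists>p\<ge>1. (shift ^^ p) x = x) \<and>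
      \<gamma> = {(shift ^^ i) x | i. i < least_period x}}"

definition beta :: "(nat \<Rightarrow> nat) set \<Rightarrow> ((nat \<Rightarrow> nat) \<Rightarrow> real) \<Rightarrow> real" where
  "beta \<gamma> c = (let x = (SOME x. x \<in> \<gamma>) in \<Sum>i<least_period x. c ((shift ^^ i) x))"

end

theory Submission
  imports Defs
begin


definition cs :: "((nat\<Rightarrow>nat)\<Rightarrow>real) \<Rightarrow> ((nat\<Rightarrow>nat)\<Rightarrow>real) \<Rightarrow> (nat\<Rightarrow>nat) \<Rightarrow> nat \<Rightarrow> real" where
  "cs l k x n = (\<Sum>i<n. l ((shift^^i) x) - k ((shift^^i) x))"

lemma cs_0[simp]: "cs l k x 0 = 0" by (simp add: cs_def)

lemma cs_Suc: "cs l k x (Suc n) = cs l k x n + (l ((shift^^n) x) - k ((shift^^n) x))"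
  by (simp add: cs_def)

lemma fp_comp: "(f^^n) ((f^^m) x) = (f^^(n+m)) x"
  by (simp add: funpow_add)

lemma cs_add: "cs l k x (m + n) = cs l k x m + cs l k ((shift^^m) x) n"
  by (induction n) (simp_all add: cs_Suc fp_comp add.commute)

lemma XA_shift: "x \<in> XA N A \<Longrightarrow> shift x \<in> XA N A" by (simp add: XA_def shift_def)
lemma XA_funpow: "x \<in> XA N A \<Longrightarrow> (shift^^i) x \<in> XA N A"
  by (induction i) (auto simp: XA_shift)

lemma per_mult: "(shift^^d) x = x \<Longrightarrow> (shift^^(j*d)) x = x"
proof (induction j)
  case (Suc j)
  have "(shift^^(Suc j * d)) x = (shift^^d) ((shift^^(j*d)) x)" by (simp add: fp_comp)
  then show ?case using Suc by simp
qed simp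

lemma per_cs_mult: "(shift^^d) x = x \<Longrightarrow> cs l k x (j*d) = real j * cs l k x d"
proof (induction j)
  case (Suc j)
  have "cs l k x (Suc j * d) = cs l k x (d + j*d)" by (simp add: add.commute)
  also have "\<dots> = cs l k x d + cs l k x (j*d)" using Suc.prems by (simp add: cs_add)
  finally show ?case using Suc by (simp add: algebra_simps)
qed simp

lemma per_rot: "(shift^^d) x = x \<Longrightarrow> cs l k ((shift^^a) x) d = cs l k x d"
proof -
  assume h: "(shift^^d) x = x"
  have "cs l k x (a + d) = cs l k x a + cs l k ((shift^^a) x) d" by (rule cs_add)
  moreover have "cs l k x (d + a) = cs l k x d + cs l k x a" using h cs_add[of l k x d a] by simp
  ultimately show ?thesis by (simp add: add.commute)
qed

lemma fp_commute: "(f^^q) ((f^^m) y) = (f^^m) ((f^^q) y)"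
  by (simp add: fp_comp add.commute)

lemma per_orbit:
  assumes "(shift^^d) x = x" "d \<ge> 1" "(shift^^q) ((shift^^a) x) = (shift^^a) x"
  shows "(shift^^q) x = x"
proof -
  have ad: "a*d \<ge> a" using assms(2) by simp
  have x: "(shift^^(a*d - a)) ((shift^^a) x) = x"
    using per_mult[OF assms(1), of a] ad by (simp add: fp_comp)
  have "(shift^^q) x = (shift^^q) ((shift^^(a*d - a)) ((shift^^a) x))" using x by simp
  also have "\<dots> = (shift^^(a*d - a)) ((shift^^q) ((shift^^a) x))" by (rule fp_commute)
  also have "\<dots> = x" using assms(3) x by simp
  finally show ?thesis .
qed

lemma lp_eq:
  assumes "(shift^^d) x = x" "d \<ge> 1"
  shows "least_period ((shift^^a) x) = least_period x"
proof -
  have "\<And>p. (p \<ge> 1 \<and> (shift^^p) ((shift^^a) x) = (shift^^a) x) = (p \<ge> 1 \<and> (shift^^p) x = x)"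
    using per_orbit[OF assms] fp_commute by metis
  then show ?thesis unfolding least_period_def by simp
qed

lemma lp_props:
  assumes "(shift^^d) x = x" "d \<ge> 1"
  shows "least_period x \<ge> 1" "(shift^^(least_period x)) x = x" "least_period x \<le> d"
proof -
  have "least_period x \<ge> 1 \<and> (shift^^(least_period x)) x = x"
    unfolding least_period_def by (rule LeastI[of _ d]) (use assms in auto)
  then show "least_period x \<ge> 1" "(shift^^(least_period x)) x = x" by auto
  show "least_period x \<le> d" unfolding least_period_def by (rule Least_le) (use assms in auto)
qed

lemma fp_mod:
  assumes "(shift^^p) x = x"
  shows "(shift^^i) x = (shift^^(i mod p)) x"
proof -
  have "(shift^^i) x = (shift^^(i mod p)) ((shift^^((i div p)*p)) x)"
    by (simp add: fp_comp)
  then show ?thesis using per_mult[OF assms] by simp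
qed

lemma lp_dvd:
  assumes "(shift^^d) x = x" "d \<ge> 1" "(shift^^q) x = x"
  shows "least_period x dvd q"
proof (rule ccontr)
  let ?p = "least_period x"
  assume nd: "\<not> ?p dvd q"
  have p: "?p \<ge> 1" "(shift^^?p) x = x" using lp_props[OF assms(1,2)] by auto
  have "(shift^^(q mod ?p)) x = x" using fp_mod[OF p(2), of q] assms(3) by simp
  moreover have "q mod ?p \<ge> 1" using nd by (simp add: dvd_eq_mod_eq_0)
  moreover have "q mod ?p < ?p" using p(1) by simp
  ultimately show False
    using not_less_Least[of "q mod ?p" "\<lambda>p. p \<ge> 1 \<and> (shift^^p) x = x"]
    unfolding least_period_def by auto
qed



context
  fixes N :: nat and A :: "nat \<Rightarrow> nat \<Rightarrow> nat" and l k b :: "(nat \<Rightarrow> nat) \<Rightarrow> real"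
  assumes trip: "suspension_triplet N A l k b"
begin

abbreviation "D \<equiv> susp_dom N A b"
abbreviation "S \<equiv> susp_step N A l k b"
abbreviation "E \<equiv> susp_eq N A l k b"

lemma kb: "x \<in> XA N A \<Longrightarrow> b (shift x) \<le> k x"
  using trip unfolding suspension_triplet_def by auto

lemma S_char: "((x,r),q) \<in> S \<longleftrightarrow> x \<in> XA N A \<and> b x \<le> r \<and> l x \<le> r \<and> q = (shift x, r - (l x - k x))"
  unfolding susp_step_def susp_dom_def by auto

lemma S_D: "(p,q) \<in> S \<Longrightarrow> p \<in> D \<and> q \<in> D"
  unfolding susp_step_def susp_dom_def using kb XA_shift by fastforce

lemma S_fun: "(p,q) \<in> S \<Longrightarrow> (p,q') \<in> S \<Longrightarrow> q = q'"
  by (cases p) (auto simp: S_char)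

lemma level_b:
  assumes "x \<in> XA N A" "b x \<le> r" "\<forall>i<n. l ((shift^^i) x) \<le> r - cs l k x i"
  shows "b ((shift^^n) x) \<le> r - cs l k x n"
proof (cases n)
  case 0 then show ?thesis using assms by simp
next
  case (Suc m)
  have "b ((shift^^n) x) = b (shift ((shift^^m) x))" using Suc by simp
  also have "\<dots> \<le> k ((shift^^m) x)" using kb XA_funpow[OF assms(1)] by blast
  also have "\<dots> \<le> r - cs l k x n"
  proof -
    have "l ((shift^^m) x) \<le> r - cs l k x m" using assms(3) Suc by simp
    then show ?thesis using Suc by (simp add: cs_Suc)
  qed
  finally show ?thesis .
qed

lemma relpow_char:
  assumes "x \<in> XA N A" "b x \<le> r"
  shows "((x,r),q) \<in> S^^n \<longleftrightarrow> (\<forall>i<n. l ((shift^^i) x) \<le> r - cs l k x i) \<and> q = ((shift^^n) x, r - cs l k x n)"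
proof (induction n arbitrary: q)
  case 0 then show ?case by (simp; blast)
next
  case (Suc n)
  have "((x,r),q) \<in> S^^Suc n \<longleftrightarrow> (\<exists>w. ((x,r),w) \<in> S^^n \<and> (w,q) \<in> S)" by auto
  also have "\<dots> \<longleftrightarrow> (\<forall>i<n. l ((shift^^i) x) \<le> r - cs l k x i) \<and> (((shift^^n) x, r - cs l k x n), q) \<in> S"
    using Suc.IH by auto
  also have "\<dots> \<longleftrightarrow> (\<forall>i<Suc n. l ((shift^^i) x) \<le> r - cs l k x i) \<and> q = ((shift^^Suc n) x, r - cs l k x (Suc n))"
    using level_b[OF assms, of n] XA_funpow[OF assms(1), of n]
    by (auto simp: S_char cs_Suc less_Suc_eq algebra_simps)
  finally show ?case .
qed

lemma relpow_D: "(p,q) \<in> S^^n \<Longrightarrow> p \<in> D \<Longrightarrow> q \<in> D"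
  by (induction n arbitrary: q) (auto dest: S_D)

lemma rtrancl_D: "(p,q) \<in> S\<^sup>* \<Longrightarrow> p \<in> D \<Longrightarrow> q \<in> D"
  by (induction rule: rtrancl_induct) (auto dest: S_D)

lemma S_conf1: "(q,z) \<in> S\<^sup>* \<Longrightarrow> (q,w) \<in> S \<Longrightarrow> z = q \<or> (w,z) \<in> S\<^sup>*"
  by (erule converse_rtranclE) (auto dest: S_fun)

definition J where "J = {(p,q). p \<in> D \<and> q \<in> D \<and> (\<exists>z. (p,z) \<in> S\<^sup>* \<and> (q,z) \<in> S\<^sup>*)}"

lemma E_J: "E = J"
proof
  show "E \<subseteq> J"
  proof
    fix pq assume "pq \<in> E"
    then consider "pq \<in> Id_on D" | "pq \<in> (S \<union> S\<inverse>)\<^sup>+" unfolding susp_eq_def by blast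
    then show "pq \<in> J"
    proof cases
      case 1 then show ?thesis unfolding J_def by auto
    next
      case 2
      obtain p q where pq: "pq = (p,q)" by (metis surj_pair)
      have "(p,q) \<in> J" using 2[unfolded pq]
      proof (induction rule: trancl_induct)
        case (base y)
        then show ?case unfolding J_def using S_D by blast
      next
        case (step y w)
        from step.IH obtain z where z: "p \<in> D" "y \<in> D" "(p,z) \<in> S\<^sup>*" "(y,z) \<in> S\<^sup>*"
          unfolding J_def by blast
        from step.hyps(2) show ?case
        proof
          assume yw: "(y,w) \<in> S"
          then have wD: "w \<in> D" using S_D by blast
          from S_conf1[OF z(4) yw] show ?thesis
          proof
            assume "z = y"
            then have "(p,w) \<in> S\<^sup>*" using z(3) yw by auto
            then show ?thesis unfolding J_def using z(1) wD by blast
          next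
            assume "(w,z) \<in> S\<^sup>*"
            then show ?thesis unfolding J_def using z(1,3) wD by blast
          qed
        next
          assume "(y,w) \<in> S\<inverse>"
          then have wy: "(w,y) \<in> S" by simp
          then have "(w,z) \<in> S\<^sup>*" using z(4) by auto
          then show ?thesis unfolding J_def using z(1,3) S_D[OF wy] by blast
        qed
      qed
      then show ?thesis using pq by simp
    qed
  qed
next
  show "J \<subseteq> E"
  proof
    fix pq assume "pq \<in> J"
    then obtain p q z where pq: "pq = (p,q)" "p \<in> D" "q \<in> D" "(p,z) \<in> S\<^sup>*" "(q,z) \<in> S\<^sup>*"
      unfolding J_def by blast
    have a: "(p,z) \<in> (S \<union> S\<inverse>)\<^sup>*" using pq(4) by (rule rtrancl_mono[THEN subsetD, rotated]) auto
    have "(q,z) \<in> (S \<union> S\<inverse>)\<^sup>*" using pq(5) by (rule rtrancl_mono[THEN subsetD, rotated]) auto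
    then have "(z,q) \<in> ((S \<union> S\<inverse>)\<inverse>)\<^sup>*" by (simp add: rtrancl_converse)
    then have "(z,q) \<in> (S \<union> S\<inverse>)\<^sup>*" by (simp add: converse_Un Un_commute)
    with a have "(p,q) \<in> (S \<union> S\<inverse>)\<^sup>*" by simp
    then have "p = q \<or> (p,q) \<in> (S \<union> S\<inverse>)\<^sup>+" by (auto simp add: rtrancl_eq_or_trancl)
    then show "pq \<in> E" unfolding susp_eq_def using pq by auto
  qed
qed

lemma equivE: "equiv D E"
proof -
  have sub: "S \<union> S\<inverse> \<subseteq> D \<times> D" by (auto dest: S_D)
  have tsub: "(S \<union> S\<inverse>)\<^sup>+ \<subseteq> D \<times> D" using trancl_subset_Sigma[OF sub] .
  show ?thesis
  proof (rule equivI)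
    show "refl_on D E" unfolding refl_on_def susp_eq_def using tsub by auto
    show "sym E" unfolding sym_def susp_eq_def
    proof (intro allI impI)
      fix x y assume "(x,y) \<in> Id_on D \<union> (S \<union> S\<inverse>)\<^sup>+"
      then show "(y,x) \<in> Id_on D \<union> (S \<union> S\<inverse>)\<^sup>+"
      proof
        assume "(x,y) \<in> (S \<union> S\<inverse>)\<^sup>+"
        then have "(y,x) \<in> ((S \<union> S\<inverse>)\<inverse>)\<^sup>+" by (simp add: trancl_converse)
        then show ?thesis by (simp add: converse_Un sup_commute)
      qed auto
    qed
    show "E \<subseteq> D \<times> D" unfolding susp_eq_def using tsub by auto
    show "trans E" unfolding trans_def susp_eq_def
      by (auto intro: trancl_trans)
  qed
qed


abbreviation "fl \<equiv> susp_flow N A l k b"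

lemma beta_pos:
  assumes x: "x \<in> XA N A" and d: "d \<ge> 1" "(shift^^d) x = x"
  shows "cs l k x d > 0"
proof -
  have "(\<lambda>_. 1::real) \<in> CZ N A" unfolding CZ_def by auto
  then obtain n :: nat where "in_Hplus N A (\<lambda>y. real n * (l y - k y) - 1)"
    using trip unfolding suspension_triplet_def order_unit_def by auto
  then obtain f h where f: "\<forall>y\<in>XA N A. f y \<ge> 0"
    and h: "\<forall>y\<in>XA N A. (real n * (l y - k y) - 1) - f y = h y - h (shift y)"
    unfolding in_Hplus_def coboundary_def by auto
  let ?y = "\<lambda>i. (shift^^i) x"
  have yX: "?y i \<in> XA N A" for i using XA_funpow[OF x] .
  have "(\<Sum>i<d. (real n * (l (?y i) - k (?y i)) - 1) - f (?y i)) = (\<Sum>i<d. h (?y i) - h (?y (Suc i)))"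
    using h yX by (intro sum.cong) auto
  also have "\<dots> = h (?y 0) - h (?y d)" by (rule sum_lessThan_telescope')
  also have "\<dots> = 0" using d by simp
  finally have "real n * cs l k x d - d - (\<Sum>i<d. f (?y i)) = 0"
    by (simp add: cs_def sum_subtractf sum_distrib_left right_diff_distrib)
  moreover have "(\<Sum>i<d. f (?y i)) \<ge> 0" using f yX by (intro sum_nonneg) auto
  ultimately have ge: "real n * cs l k x d \<ge> 1" using d by simp
  show ?thesis
  proof (rule ccontr)
    assume "\<not> cs l k x d > 0"
    then have "real n * cs l k x d \<le> 0" by (simp add: mult_nonneg_nonpos)
    with ge show False by simp
  qed
qed

lemma relpow_shift:
  assumes "x \<in> XA N A" "b x \<le> r" "((x,r),(x',r')) \<in> S^^n" "t \<ge> 0"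
  shows "((x,r+t),(x',r'+t)) \<in> S^^n"
proof -
  have "b x \<le> r + t" using assms by simp
  then show ?thesis using assms relpow_char[OF assms(1,2)] relpow_char[OF assms(1), of "r+t"] by force
qed

lemma E_D: "(p,q) \<in> E \<Longrightarrow> p \<in> D \<and> q \<in> D"
  using equivE unfolding equiv_def refl_on_def by blast

lemma E_join:
  assumes "((x,r),(y,s)) \<in> E"
  obtains m n z where "((x,r),z) \<in> S^^m" "((y,s),z) \<in> S^^n"
  using assms unfolding E_J J_def by (auto simp: rtrancl_power)

lemma join_E:
  assumes "p \<in> D" "q \<in> D" "(p,z) \<in> S^^m" "(q,z) \<in> S^^n"
  shows "(p,q) \<in> E"
  using assms relpow_imp_rtrancl unfolding E_J J_def by blast

lemma E_shift:
  assumes "((x,r),(y,s)) \<in> E" "t \<ge> 0"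
  shows "((x,r+t),(y,s+t)) \<in> E"
proof -
  obtain m n z where z: "((x,r),z) \<in> S^^m" "((y,s),z) \<in> S^^n" using E_join[OF assms(1)] .
  obtain z1 z2 where zz: "z = (z1,z2)" by (metis surj_pair)
  have D: "x \<in> XA N A" "b x \<le> r" "y \<in> XA N A" "b y \<le> s"
    using E_D[OF assms(1)] by (auto simp: susp_dom_def)
  have "((x,r+t),(z1,z2+t)) \<in> S^^m" "((y,s+t),(z1,z2+t)) \<in> S^^n"
    using relpow_shift[OF D(1,2)] relpow_shift[OF D(3,4)] z zz assms(2) by auto
  moreover have "(x,r+t) \<in> D" "(y,s+t) \<in> D" using D assms(2) by (auto simp: susp_dom_def)
  ultimately show ?thesis using join_E by blast
qed

lemma flow_cls:
  assumes "(x,r) \<in> D" "t \<ge> 0"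
  shows "fl t (E``{(x,r)}) = E``{(x,r+t)}"
proof -
  let ?M = "{(y, s + t) | y s. (y,s) \<in> E``{(x,r)}}"
  have rel: "((x,r+t),m) \<in> E" if "m \<in> ?M" for m
    using that E_shift assms(2) by auto
  have mem: "(x,r+t) \<in> ?M" using assms equivE unfolding equiv_def refl_on_def by blast
  have tr: "trans E" using equivE unfolding equiv_def by blast
  have "E``?M = E``{(x,r+t)}"
  proof
    show "E``?M \<subseteq> E``{(x,r+t)}" using rel tr unfolding trans_def by blast
    show "E``{(x,r+t)} \<subseteq> E``?M" using mem by blast
  qed
  then show ?thesis unfolding susp_flow_def by simp
qed

lemma cls_eq: "p \<in> D \<Longrightarrow> q \<in> D \<Longrightarrow> (E``{p} = E``{q}) \<longleftrightarrow> (p,q) \<in> E"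
  using equiv_class_eq_iff[OF equivE] by blast

lemma relpow_E: "(p,q) \<in> S^^n \<Longrightarrow> p \<in> D \<Longrightarrow> (p,q) \<in> E"
proof -
  assume a: "(p,q) \<in> S^^n" "p \<in> D"
  have "(q,q) \<in> S^^0" by simp
  then show ?thesis using join_E a relpow_D by blast
qed


lemma periodic_struct:
  assumes x: "x \<in> XA N A" "b x \<le> r" and T: "T > 0" and E: "((x,r+T),(x,r)) \<in> E"
  shows "\<exists>n d. d \<ge> 1 \<and> (shift^^d) ((shift^^n) x) = (shift^^n) x \<and> T = cs l k ((shift^^n) x) d
     \<and> ((x,r),((shift^^n) x, r - cs l k x n)) \<in> S^^n
     \<and> (((shift^^n) x, r - cs l k x n + T), ((shift^^n) x, r - cs l k x n)) \<in> S^^d"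
proof -
  obtain m n z where z: "((x,r+T),z) \<in> S^^m" "((x,r),z) \<in> S^^n" using E_join[OF E] .
  have xT: "b x \<le> r + T" using x T by simp
  have cm: "\<forall>i<m. l ((shift^^i) x) \<le> r + T - cs l k x i" and zm: "z = ((shift^^m) x, r + T - cs l k x m)"
    using z(1) relpow_char[OF x(1) xT] by auto
  have cn: "\<forall>i<n. l ((shift^^i) x) \<le> r - cs l k x i" and zn: "z = ((shift^^n) x, r - cs l k x n)"
    using z(2) relpow_char[OF x] by auto
  have eqx: "(shift^^m) x = (shift^^n) x" and eqr: "r + T - cs l k x m = r - cs l k x n"
    using zm zn by auto
  have mn: "n < m"
  proof (rule ccontr)
    assume "\<not> n < m"
    then obtain e where e: "n = m + e" by (metis le_add_diff_inverse not_less)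
    show False
    proof (cases "e = 0")
      case True then show False using eqr e T by simp
    next
      case False
      let ?x1 = "(shift^^m) x"
      have "(shift^^e) ?x1 = (shift^^(e+m)) x" by (rule fp_comp)
      also have "\<dots> = (shift^^n) x" using e by (simp add: add.commute)
      also have "\<dots> = ?x1" using eqx by simp
      finally have per: "(shift^^e) ?x1 = ?x1" .
      have "cs l k ?x1 e > 0" using beta_pos[OF XA_funpow[OF x(1)] _ per] False by simp
      moreover have "cs l k x n = cs l k x m + cs l k ?x1 e" using e cs_add by simp
      ultimately show False using eqr T by simp
    qed
  qed
  define d where "d = m - n"
  have d: "m = n + d" "d \<ge> 1" using mn unfolding d_def by auto
  let ?x1 = "(shift^^n) x"
  let ?r1 = "r - cs l k x n"
  have per: "(shift^^d) ?x1 = ?x1" using eqx d by (simp add: fp_comp add.commute)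
  have Tc: "T = cs l k ?x1 d" using eqr d(1) cs_add[of l k x n d] by simp
  have x1: "?x1 \<in> XA N A" "b ?x1 \<le> ?r1" using level_b[OF x cn] XA_funpow[OF x(1)] by auto
  have x1T: "b ?x1 \<le> ?r1 + T" using x1 T by simp
  have path: "((?x1, ?r1 + T), (?x1, ?r1)) \<in> S^^d"
  proof -
    have "\<forall>i<d. l ((shift^^i) ?x1) \<le> ?r1 + T - cs l k ?x1 i"
    proof (intro allI impI)
      fix i assume "i < d"
      then have "n + i < m" using d by simp
      then have "l ((shift^^(n+i)) x) \<le> r + T - cs l k x (n+i)" using cm by blast
      moreover have e1: "(shift^^i) ?x1 = (shift^^(n+i)) x" using fp_comp[where f=shift and n=i and m=n and x=x] by (simp add: add.commute)
      moreover have e2: "cs l k x (n+i) = cs l k x n + cs l k ?x1 i" by (rule cs_add)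
      ultimately show "l ((shift^^i) ?x1) \<le> ?r1 + T - cs l k ?x1 i" by simp
    qed
    moreover have "?r1 + T - cs l k ?x1 d = ?r1" using Tc by simp
    ultimately show ?thesis using relpow_char[OF x1(1) x1T] per by simp
  qed
  show ?thesis
    by (rule exI[of _ n], rule exI[of _ d]) (use d(2) per Tc z(2) zn path in auto)
qed

definition good where
  "good x1 r1 d \<longleftrightarrow> x1 \<in> XA N A \<and> b x1 \<le> r1 \<and> d \<ge> 1 \<and> (shift^^d) x1 = x1
     \<and> ((x1, r1 + cs l k x1 d),(x1,r1)) \<in> S^^d"

lemma good_D: "good x1 r1 d \<Longrightarrow> (x1,r1) \<in> D"
  unfolding good_def susp_dom_def by auto

lemma good_T: "good x1 r1 d \<Longrightarrow> cs l k x1 d > 0"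
  unfolding good_def using beta_pos by auto

lemma good_mono: "good x1 r1 d \<Longrightarrow> t \<ge> 0 \<Longrightarrow> good x1 (r1+t) d"
proof -
  assume g: "good x1 r1 d" and t: "t \<ge> 0"
  have x1: "x1 \<in> XA N A" "b x1 \<le> r1" "d \<ge> 1" "(shift^^d) x1 = x1"
    and path: "((x1, r1 + cs l k x1 d),(x1,r1)) \<in> S^^d" using g unfolding good_def by auto
  have "b x1 \<le> r1 + cs l k x1 d" using x1 good_T[OF g] by simp
  then have "((x1, r1 + cs l k x1 d + t),(x1,r1 + t)) \<in> S^^d"
    using relpow_shift path t x1(1) by blast
  then show ?thesis using x1 t unfolding good_def by (simp add: algebra_simps)
qed

lemma good_path: "good x1 r1 d \<Longrightarrow> ((x1, r1 + real j * cs l k x1 d),(x1,r1)) \<in> S^^(j*d)"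
proof (induction j)
  case 0 then show ?case by simp
next
  case (Suc j)
  let ?T = "cs l k x1 d"
  have "?T > 0" using good_T[OF Suc.prems] .
  then have "good x1 (r1 + real j * ?T) d" using good_mono[OF Suc.prems] by simp
  then have a: "((x1, r1 + real j * ?T + ?T),(x1, r1 + real j * ?T)) \<in> S^^d" unfolding good_def by simp
  have "((x1, r1 + real (Suc j) * ?T),(x1,r1)) \<in> S^^d O S^^(j*d)"
    using a Suc.IH[OF Suc.prems] by (auto simp: algebra_simps)
  then show ?case by (simp add: relpow_add)
qed

lemma good_iter: "good x1 r1 d \<Longrightarrow> E``{(x1, r1 + real j * cs l k x1 d)} = E``{(x1,r1)}"
proof -
  assume g: "good x1 r1 d"
  have "real j * cs l k x1 d \<ge> 0" using good_T[OF g] by simp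
  then have D1: "(x1, r1 + real j * cs l k x1 d) \<in> D"
    using g unfolding good_def susp_dom_def by auto
  show ?thesis using cls_eq[OF D1 good_D[OF g]] relpow_E[OF good_path[OF g] D1] by simp
qed

lemma good_beta:
  assumes g: "good x1 r1 d"
  shows "fl (cs l k x1 (least_period x1)) (E``{(x1,r1)}) = E``{(x1,r1)}"
proof -
  let ?T = "cs l k x1 d"
  let ?p = "least_period x1"
  let ?B = "cs l k x1 ?p"
  have x1: "x1 \<in> XA N A" "b x1 \<le> r1" "d \<ge> 1" "(shift^^d) x1 = x1"
    and path: "((x1, r1 + ?T),(x1,r1)) \<in> S^^d" using g unfolding good_def by auto
  have T: "?T > 0" using good_T[OF g] .
  have p: "?p \<ge> 1" "(shift^^?p) x1 = x1" "?p \<le> d" using lp_props[OF x1(4,3)] by auto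
  have B: "?B > 0" using beta_pos[OF x1(1) p(1,2)] .
  have x1T: "b x1 \<le> r1 + ?T" using x1 T by simp
  have cond: "\<forall>i<d. l ((shift^^i) x1) \<le> r1 + ?T - cs l k x1 i"
    using path relpow_char[OF x1(1) x1T] by auto
  have x1TB: "b x1 \<le> r1 + ?T + ?B" using x1 T B by simp
  have c2: "\<forall>i<?p. l ((shift^^i) x1) \<le> r1 + ?T + ?B - cs l k x1 i"
  proof (intro allI impI)
    fix i assume "i < ?p"
    then have "i < d" using p(3) by simp
    then have "l ((shift^^i) x1) \<le> r1 + ?T - cs l k x1 i" using cond by blast
    then show "l ((shift^^i) x1) \<le> r1 + ?T + ?B - cs l k x1 i" using B by simp
  qed
  have "((x1, r1 + ?T + ?B),(x1, r1 + ?T)) \<in> S^^?p"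
    unfolding relpow_char[OF x1(1) x1TB] using c2 p(2) by simp
  then have "E``{(x1, r1 + ?T + ?B)} = E``{(x1, r1 + ?T)}"
    using cls_eq relpow_E x1TB x1T x1(1) unfolding susp_dom_def by auto
  moreover have "E``{(x1, r1 + ?T)} = E``{(x1,r1)}" using good_iter[OF g, of 1] by simp
  moreover have "fl ?B (E``{(x1, r1 + ?T)}) = E``{(x1, r1 + ?T + ?B)}"
    using flow_cls[of x1 "r1 + ?T" ?B] x1T x1(1) B unfolding susp_dom_def by auto
  ultimately show ?thesis by simp
qed

lemma good_min:
  assumes g: "good x1 r1 d" and T': "T' > 0" and per: "fl T' (E``{(x1,r1)}) = E``{(x1,r1)}"
  shows "cs l k x1 (least_period x1) \<le> T'"
proof -
  have x1: "x1 \<in> XA N A" "b x1 \<le> r1" "d \<ge> 1" "(shift^^d) x1 = x1" using g unfolding good_def by auto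
  have D1: "(x1, r1 + T') \<in> D" using x1 T' unfolding susp_dom_def by auto
  have "E``{(x1, r1 + T')} = E``{(x1,r1)}" using per flow_cls[of x1 r1 T'] good_D[OF g] T' by simp
  then have "((x1, r1+T'),(x1,r1)) \<in> E" using cls_eq[OF D1 good_D[OF g]] by simp
  from periodic_struct[OF x1(1,2) T' this] obtain n d' where
    nd: "d' \<ge> 1" "(shift^^d') ((shift^^n) x1) = (shift^^n) x1" "T' = cs l k ((shift^^n) x1) d'" by blast
  have per1: "(shift^^d') x1 = x1" using per_orbit[OF x1(4,3) nd(2)] .
  have Tc: "T' = cs l k x1 d'" using nd(3) per_rot[OF per1] by simp
  let ?p = "least_period x1"
  have "?p dvd d'" using lp_dvd[OF x1(4,3) per1] .
  then obtain j where j: "d' = ?p * j" by blast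
  have p: "?p \<ge> 1" "(shift^^?p) x1 = x1" using lp_props[OF x1(4,3)] by auto
  have j1: "j \<ge> 1" using j nd(1) by (cases j) auto
  have B: "cs l k x1 ?p > 0" using beta_pos[OF x1(1) p] .
  have "T' = real j * cs l k x1 ?p" using Tc j per_cs_mult[OF p(2), of l k j] by (simp add: mult.commute)
  then show ?thesis using j1 B by (simp add: mult_le_cancel_right1)
qed


definition Gam where "Gam \<tau> = {x. (\<exists>q\<ge>1. (shift^^q) x = x) \<and> (\<exists>u\<in>\<tau>. \<exists>r. (x,r) \<in> u)}"
definition tauof where "tauof x1 r1 = {fl t (E``{(x1,r1)}) | t. t \<ge> 0}"

lemma Porb_good:
  assumes "\<tau> \<in> flow_Porb N A l k b"
  shows "\<exists>x1 r1 d. good x1 r1 d \<and> \<tau> = tauof x1 r1"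
proof -
  obtain u T where u: "u \<in> susp_space N A l k b" "T > 0" "fl T u = u" "\<tau> = {fl t u | t. t \<ge> 0}"
    using assms unfolding flow_Porb_def by blast
  obtain p where p: "p \<in> D" "u = E``{p}" using u(1) unfolding susp_space_def by (auto elim: quotientE)
  obtain y s where ys: "p = (y,s)" by (metis surj_pair)
  have y: "y \<in> XA N A" "b y \<le> s" using p(1) ys unfolding susp_dom_def by auto
  have DT: "(y, s+T) \<in> D" using y u(2) unfolding susp_dom_def by auto
  have eqc: "E``{(y,s+T)} = E``{(y,s)}" using u(3) p ys flow_cls[of y s T] u(2) by simp
  have "((y,s+T),(y,s)) \<in> E" using cls_eq[OF DT, of "(y,s)"] p(1) ys eqc by blast
  from periodic_struct[OF y u(2) this] obtain n d where nd:
    "d \<ge> 1" "(shift^^d) ((shift^^n) y) = (shift^^n) y" "T = cs l k ((shift^^n) y) d"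
    "((y,s),((shift^^n) y, s - cs l k y n)) \<in> S^^n"
    "(((shift^^n) y, s - cs l k y n + T), ((shift^^n) y, s - cs l k y n)) \<in> S^^d" by blast
  let ?x1 = "(shift^^n) y" let ?r1 = "s - cs l k y n"
  have D1: "(?x1, ?r1) \<in> D" using relpow_D[OF nd(4)] p(1) ys by simp
  have g: "good ?x1 ?r1 d" unfolding good_def using D1 nd unfolding susp_dom_def by auto
  have "u = E``{(?x1,?r1)}" using p ys cls_eq[OF _ D1] relpow_E[OF nd(4)] by simp
  then show ?thesis using g u(4) unfolding tauof_def by blast
qed

lemma good_Porb:
  assumes g: "good x1 r1 d"
  shows "tauof x1 r1 \<in> flow_Porb N A l k b"
proof -
  let ?u = "E``{(x1,r1)}"
  have u: "?u \<in> susp_space N A l k b" using good_D[OF g] unfolding susp_space_def by (rule quotientI)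
  have T: "cs l k x1 d > 0" using good_T[OF g] .
  have "fl (cs l k x1 d) ?u = ?u" using flow_cls[OF good_D[OF g]] T good_iter[OF g, of 1] by simp
  then show ?thesis unfolding flow_Porb_def tauof_def using u T by blast
qed

lemma good_split:
  assumes g: "good x1 r1 d"
  shows "\<exists>R. ((shift^^a) x1, R) \<in> D \<and> E``{((shift^^a) x1, R)} = E``{(x1,r1)}"
proof -
  have x1: "x1 \<in> XA N A" "b x1 \<le> r1" "d \<ge> 1" using g unfolding good_def by auto
  let ?T = "cs l k x1 d"
  have T: "?T > 0" using good_T[OF g] .
  have path: "((x1, r1 + real a * ?T),(x1,r1)) \<in> S^^(a + (a*d - a))"
    using good_path[OF g, of a] x1(3) by simp
  then obtain w where w: "((x1, r1 + real a * ?T), w) \<in> S^^a" "(w,(x1,r1)) \<in> S^^(a*d - a)"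
    by (auto simp: relpow_add)
  have aT: "real a * ?T \<ge> 0" using T by simp
  have D0: "(x1, r1 + real a * ?T) \<in> D" using x1 aT unfolding susp_dom_def by auto
  have x1a: "b x1 \<le> r1 + real a * ?T" using x1 aT by simp
  have wf: "fst w = (shift^^a) x1" using w(1) relpow_char[OF x1(1) x1a] by auto
  have wD: "w \<in> D" using relpow_D[OF w(1) D0] .
  have "(w,(x1,r1)) \<in> E" using join_E[OF wD good_D[OF g] w(2)] by (meson relpow_0_I)
  then have eqc: "E``{w} = E``{(x1,r1)}" using cls_eq[OF wD good_D[OF g]] by simp
  have w_eq: "w = ((shift^^a) x1, snd w)" using wf by (cases w) auto
  have "((shift^^a) x1, snd w) \<in> D \<and> E``{((shift^^a) x1, snd w)} = E``{(x1,r1)}"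
    using wD eqc w_eq by metis
  then show ?thesis by blast
qed

lemma Gam_good:
  assumes g: "good x1 r1 d"
  shows "Gam (tauof x1 r1) = {(shift^^i) x1 | i. True}"
proof
  have x1: "x1 \<in> XA N A" "b x1 \<le> r1" "d \<ge> 1" "(shift^^d) x1 = x1" using g unfolding good_def by auto
  show "Gam (tauof x1 r1) \<subseteq> {(shift^^i) x1 | i. True}"
  proof
    fix x assume "x \<in> Gam (tauof x1 r1)"
    then obtain q t r where q: "q \<ge> 1" "(shift^^q) x = x" and t: "t \<ge> 0"
      and xr: "(x,r) \<in> fl t (E``{(x1,r1)})"
      unfolding Gam_def tauof_def by blast
    have x1t: "b x1 \<le> r1 + t" using x1 t by simp
    have "(x,r) \<in> E``{(x1,r1+t)}" using xr flow_cls[OF good_D[OF g] t] by simp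
    then have E1: "((x1,r1+t),(x,r)) \<in> E" by simp
    have xD: "x \<in> XA N A" "b x \<le> r" using E_D[OF E1] unfolding susp_dom_def by auto
    obtain m n z where z: "((x1,r1+t),z) \<in> S^^m" "((x,r),z) \<in> S^^n" using E_join[OF E1] .
    have "fst z = (shift^^m) x1" using z(1) relpow_char[OF x1(1) x1t] by auto
    moreover have "fst z = (shift^^n) x" using z(2) relpow_char[OF xD] by auto
    ultimately have eq: "(shift^^n) x = (shift^^m) x1" by simp
    have nq: "n \<le> n*q" using q(1) by simp
    have "x = (shift^^(n*q)) x" using per_mult[OF q(2), of n] by (simp add: mult.commute)
    also have "\<dots> = (shift^^(n*q - n)) ((shift^^n) x)" using nq by (simp add: fp_comp)
    also have "\<dots> = (shift^^(n*q - n + m)) x1" using eq by (simp add: fp_comp)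
    finally show "x \<in> {(shift^^i) x1 | i. True}" by blast
  qed
  show "{(shift^^i) x1 | i. True} \<subseteq> Gam (tauof x1 r1)"
  proof
    fix y assume "y \<in> {(shift^^i) x1 | i. True}"
    then obtain a where a: "y = (shift^^a) x1" by blast
    have per: "(shift^^d) y = y" using a x1(4) fp_commute[where f=shift and q=d and m=a and y=x1] by metis
    obtain R where R: "(y,R) \<in> D" "E``{(y,R)} = E``{(x1,r1)}" using good_split[OF g, of a] a by blast
    have "(y,R) \<in> E``{(y,R)}" using R(1) equivE unfolding equiv_def refl_on_def by blast
    then have "(y,R) \<in> E``{(x1,r1)}" using R(2) by simp
    moreover have "E``{(x1,r1)} \<in> tauof x1 r1"
      unfolding tauof_def using flow_cls[OF good_D[OF g], of 0] by force
    ultimately show "y \<in> Gam (tauof x1 r1)" unfolding Gam_def using per x1(3) by blast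
  qed
qed

lemma orb_lp:
  assumes "(shift^^d) x = x" "d \<ge> 1"
  shows "{(shift^^i) x | i. True} = {(shift^^i) x | i. i < least_period x}"
proof -
  have p: "least_period x \<ge> 1" "(shift^^(least_period x)) x = x" using lp_props[OF assms] by auto
  show ?thesis
  proof
    show "{(shift^^i) x | i. True} \<subseteq> {(shift^^i) x | i. i < least_period x}"
    proof
      fix y assume "y \<in> {(shift^^i) x | i. True}"
      then obtain i where "y = (shift^^i) x" by blast
      then have "y = (shift^^(i mod least_period x)) x" using fp_mod[OF p(2)] by simp
      moreover have "i mod least_period x < least_period x" using p(1) by simp
      ultimately show "y \<in> {(shift^^i) x | i. i < least_period x}" by blast
    qed
  qed blast
qed

lemma Gam_in:
  assumes g: "good x1 r1 d"
  shows "Gam (tauof x1 r1) \<in> XA_Porb N A"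
proof -
  have x1: "x1 \<in> XA N A" "b x1 \<le> r1" "d \<ge> 1" "(shift^^d) x1 = x1" using g unfolding good_def by auto
  show ?thesis unfolding XA_Porb_def Gam_good[OF g] orb_lp[OF x1(4,3)] using x1 by blast
qed

lemma tau_sub:
  assumes g1: "good x1 r1 d" and g2: "good x2 r2 d'" and x2: "x2 \<in> {(shift^^i) x1 | i. True}"
  shows "tauof x2 r2 \<subseteq> tauof x1 r1"
proof
  obtain a where a: "x2 = (shift^^a) x1" using x2 by blast
  obtain R where R: "(x2,R) \<in> D" "E``{(x2,R)} = E``{(x1,r1)}" using good_split[OF g1, of a] a by blast
  let ?T = "cs l k x2 d'"
  have T: "?T > 0" using good_T[OF g2] .
  obtain j :: nat where j: "R - r2 < real j * ?T" using reals_Archimedean3[OF T] by blast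
  define t0 where "t0 = r2 + real j * ?T - R"
  have t0: "t0 \<ge> 0" using j unfolding t0_def by simp
  fix v assume "v \<in> tauof x2 r2"
  then obtain t where t: "t \<ge> 0" "v = fl t (E``{(x2,r2)})" unfolding tauof_def by blast
  have "v = E``{(x2, r2 + t)}" using t flow_cls[OF good_D[OF g2]] by simp
  also have "\<dots> = E``{(x2, r2 + t + real j * ?T)}" using good_iter[OF good_mono[OF g2 t(1)], of j] by simp
  also have "\<dots> = E``{(x2, R + (t0 + t))}" unfolding t0_def by (simp add: algebra_simps)
  also have "\<dots> = fl (t0 + t) (E``{(x2,R)})" using flow_cls[OF R(1)] t0 t by simp
  also have "\<dots> = fl (t0 + t) (E``{(x1,r1)})" using R(2) by simp
  finally show "v \<in> tauof x1 r1" unfolding tauof_def using t0 t by auto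
qed

lemma good_length:
  assumes g: "good x1 r1 d"
  shows "orbit_length N A l k b (tauof x1 r1) = cs l k x1 (least_period x1)"
proof -
  have x1: "x1 \<in> XA N A" "b x1 \<le> r1" "d \<ge> 1" "(shift^^d) x1 = x1" using g unfolding good_def by auto
  let ?u = "SOME u. u \<in> tauof x1 r1"
  have "E``{(x1,r1)} \<in> tauof x1 r1"
    unfolding tauof_def using flow_cls[OF good_D[OF g], of 0] by force
  then have "?u \<in> tauof x1 r1" by (rule someI)
  then obtain t where t: "t \<ge> 0" "?u = fl t (E``{(x1,r1)})" unfolding tauof_def by blast
  have u: "?u = E``{(x1, r1 + t)}" using t flow_cls[OF good_D[OF g]] by simp
  have g': "good x1 (r1+t) d" using good_mono[OF g t(1)] .
  have p: "least_period x1 \<ge> 1" "(shift^^(least_period x1)) x1 = x1" using lp_props[OF x1(4,3)] by auto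
  have B: "cs l k x1 (least_period x1) > 0" using beta_pos[OF x1(1) p] .
  have "(LEAST s. s > 0 \<and> fl s ?u = ?u) = cs l k x1 (least_period x1)"
    unfolding u
    by (rule Least_equality) (use B good_beta[OF g'] good_min[OF g'] in auto)
  then show ?thesis unfolding orbit_length_def Let_def by simp
qed

lemma good_betaG:
  assumes g: "good x1 r1 d"
  shows "beta (Gam (tauof x1 r1)) (\<lambda>x. l x - k x) = cs l k x1 (least_period x1)"
proof -
  have x1: "x1 \<in> XA N A" "b x1 \<le> r1" "d \<ge> 1" "(shift^^d) x1 = x1" using g unfolding good_def by auto
  let ?x = "SOME x. x \<in> {(shift^^i) x1 | i. True}"
  have "?x \<in> {(shift^^i) x1 | i. True}" by (rule someI[of _ x1]) (metis (mono_tags) funpow_0 mem_Collect_eq)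
  then obtain a where a: "?x = (shift^^a) x1" by blast
  have p: "(shift^^(least_period x1)) x1 = x1" using lp_props[OF x1(4,3)] by auto
  have "least_period ?x = least_period x1" using a lp_eq[OF x1(4,3)] by simp
  then have "beta (Gam (tauof x1 r1)) (\<lambda>x. l x - k x) = cs l k ?x (least_period x1)"
    unfolding beta_def Gam_good[OF g] Let_def cs_def by simp
  also have "\<dots> = cs l k x1 (least_period x1)" using a per_rot[OF p] by simp
  finally show ?thesis .
qed


lemma main:
  "\<exists>\<Gamma>. bij_betw \<Gamma> (flow_Porb N A l k b) (XA_Porb N A) \<and>
           (\<forall>\<tau>\<in>flow_Porb N A l k b.
              orbit_length N A l k b \<tau> = beta (\<Gamma> \<tau>) (\<lambda>x. l x - k x))"
proof (intro exI conjI)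
  show "bij_betw Gam (flow_Porb N A l k b) (XA_Porb N A)"
    unfolding bij_betw_def
  proof (intro conjI)
    show "inj_on Gam (flow_Porb N A l k b)"
    proof (rule inj_onI)
      fix \<tau>1 \<tau>2 assume t1: "\<tau>1 \<in> flow_Porb N A l k b" and t2: "\<tau>2 \<in> flow_Porb N A l k b"
        and eq: "Gam \<tau>1 = Gam \<tau>2"
      obtain x1 r1 d1 where g1: "good x1 r1 d1" "\<tau>1 = tauof x1 r1" using Porb_good[OF t1] by blast
      obtain x2 r2 d2 where g2: "good x2 r2 d2" "\<tau>2 = tauof x2 r2" using Porb_good[OF t2] by blast
      have O: "{(shift^^i) x1 | i. True} = {(shift^^i) x2 | i. True}"
        using eq g1 g2 Gam_good by metis
      have m1: "x1 \<in> {(shift^^i) x2 | i. True}" using O by (metis (mono_tags) funpow_0 mem_Collect_eq)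
      have m2: "x2 \<in> {(shift^^i) x1 | i. True}" using O by (metis (mono_tags) funpow_0 mem_Collect_eq)
      show "\<tau>1 = \<tau>2" using tau_sub[OF g1(1) g2(1) m2] tau_sub[OF g2(1) g1(1) m1] g1(2) g2(2) by blast
    qed
    show "Gam ` flow_Porb N A l k b = XA_Porb N A"
    proof
      show "Gam ` flow_Porb N A l k b \<subseteq> XA_Porb N A"
        using Porb_good Gam_in by blast
      show "XA_Porb N A \<subseteq> Gam ` flow_Porb N A l k b"
      proof
        fix \<gamma> assume "\<gamma> \<in> XA_Porb N A"
        then obtain x q where x: "x \<in> XA N A" "q \<ge> 1" "(shift^^q) x = x"
          and \<gamma>: "\<gamma> = {(shift^^i) x | i. i < least_period x}"
          unfolding XA_Porb_def by blast
        let ?p = "least_period x"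
        have p: "?p \<ge> 1" "(shift^^?p) x = x" using lp_props[OF x(3,2)] by auto
        let ?B = "cs l k x ?p"
        have B: "?B > 0" using beta_pos[OF x(1) p] .
        define r where "r = Max (insert (b x) ((\<lambda>i. l ((shift^^i) x) + cs l k x i) ` {..<?p}))"
        have rb: "b x \<le> r" unfolding r_def by (rule Max_ge) auto
        have ri: "l ((shift^^i) x) + cs l k x i \<le> r" if "i < ?p" for i
          unfolding r_def by (rule Max_ge) (use that in auto)
        have rB: "b x \<le> r + ?B" using rb B by simp
        have "((x, r + ?B),(x,r)) \<in> S^^?p"
          unfolding relpow_char[OF x(1) rB] using ri B p(2) by force
        then have g: "good x r ?p" unfolding good_def using x(1) rb p by auto
        have "Gam (tauof x r) = \<gamma>" using Gam_good[OF g] orb_lp[OF x(3,2)] \<gamma> by simp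
        then show "\<gamma> \<in> Gam ` flow_Porb N A l k b" using good_Porb[OF g] by blast
      qed
    qed
  qed
  show "\<forall>\<tau>\<in>flow_Porb N A l k b. orbit_length N A l k b \<tau> = beta (Gam \<tau>) (\<lambda>x. l x - k x)"
  proof
    fix \<tau> assume "\<tau> \<in> flow_Porb N A l k b"
    then obtain x1 r1 d where g: "good x1 r1 d" "\<tau> = tauof x1 r1" using Porb_good by blast
    show "orbit_length N A l k b \<tau> = beta (Gam \<tau>) (\<lambda>x. l x - k x)"
      using good_length[OF g(1)] good_betaG[OF g(1)] g(2) by simp
  qed
qed

end

theorem lemma4p1:
  fixes N :: nat and A :: "nat \<Rightarrow> nat \<Rightarrow> nat"
    and l k b :: "(nat \<Rightarrow> nat) \<Rightarrow> real"
  assumes "N > 1"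
    and "zero_one_matrix N A"
    and "irreducible_matrix N A"
    and "\<not> permutation_matrix N A"
    and "suspension_triplet N A l k b"
  shows "\<exists>\<Gamma>. bij_betw \<Gamma> (flow_Porb N A l k b) (XA_Porb N A) \<and>
           (\<forall>\<tau>\<in>flow_Porb N A l k b.
              orbit_length N A l k b \<tau> = beta (\<Gamma> \<tau>) (\<lambda>x. l x - k x))"
  using main[OF assms(5)] .

end
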